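(* Let $A$ be a left brace and let $a\in A$ be an element of infinite additive order. Let $c=a\star a$ and suppose that $a\star c=0$. Then $\langle a\rangle\cap\langle c\rangle=0$, where $\langle x\rangle$ denotes the cyclic subgroup of $(A,+)$ generated by $x$. In particular, if $a\in\zeta_2(\star,A)$ (and $a$ has infinite additive order), then $\langle a\rangle\cap\langle a\star a\rangle=0$.
   Context: A left brace is a set $A$ with two operations $+$ and $\cdot$ such that $(A,+)$ is an abelian group, $(A,\cdot)$ is a group, and $a(b+c)=ab+ac-a$ for all $a,b,c\in A$. Put $a\star b=ab-a-b$. The $\star$-center is $\zeta(\star,A)=\{a: a\star x=x\star a=0\ \forall x\in A\}$, an ideal of $A$; $\zeta_2(\star,A)$ is defined by $\zeta_2(\star,A)/\zeta(\star,A)=\zeta(\star,A/\zeta(\star,A))$. *)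

theory Defs
  imports Main
begin

definition left_brace ::
  "'a set \<Rightarrow> ('a \<Rightarrow> 'a \<Rightarrow> 'a) \<Rightarrow> 'a \<Rightarrow> ('a \<Rightarrow> 'a)
   \<Rightarrow> ('a \<Rightarrow> 'a \<Rightarrow> 'a) \<Rightarrow> 'a \<Rightarrow> ('a \<Rightarrow> 'a) \<Rightarrow> bool" where
  "left_brace A add zero neg mul one minv \<longleftrightarrow>
     \<comment> \<open>(A,+) abelian group\<close>
     zero \<in> A \<and> (\<forall>x\<in>A. \<forall>y\<in>A. add x y \<in> A) \<and> (\<forall>x\<in>A. neg x \<in> A) \<and>
     (\<forall>x\<in>A. \<forall>y\<in>A. \<forall>z\<in>A. add (add x y) z = add x (add y z)) \<and>
     (\<forall>x\<in>A. \<forall>y\<in>A. add x y = add y x) \<and>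
     (\<forall>x\<in>A. add zero x = x) \<and> (\<forall>x\<in>A. add (neg x) x = zero) \<and>
     \<comment> \<open>(A,\<cdot>) group\<close>
     one \<in> A \<and> (\<forall>x\<in>A. \<forall>y\<in>A. mul x y \<in> A) \<and> (\<forall>x\<in>A. minv x \<in> A) \<and>
     (\<forall>x\<in>A. \<forall>y\<in>A. \<forall>z\<in>A. mul (mul x y) z = mul x (mul y z)) \<and>
     (\<forall>x\<in>A. mul one x = x \<and> mul x one = x) \<and>
     (\<forall>x\<in>A. mul (minv x) x = one \<and> mul x (minv x) = one) \<and>
     \<comment> \<open>left brace compatibility a(b+c) = ab + ac - a\<close>
     (\<forall>a\<in>A. \<forall>b\<in>A. \<forall>c\<in>A.
        mul a (add b c) = add (add (mul a b) (mul a c)) (neg a))"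

definition star :: "('a \<Rightarrow> 'a \<Rightarrow> 'a) \<Rightarrow> ('a \<Rightarrow> 'a) \<Rightarrow> ('a \<Rightarrow> 'a \<Rightarrow> 'a) \<Rightarrow> 'a \<Rightarrow> 'a \<Rightarrow> 'a" where
  "star add neg mul a b = add (add (mul a b) (neg a)) (neg b)"

fun nat_mult :: "('a \<Rightarrow> 'a \<Rightarrow> 'a) \<Rightarrow> 'a \<Rightarrow> nat \<Rightarrow> 'a \<Rightarrow> 'a" where
  "nat_mult add zero 0 x = zero"
| "nat_mult add zero (Suc n) x = add x (nat_mult add zero n x)"

definition int_mult :: "('a \<Rightarrow> 'a \<Rightarrow> 'a) \<Rightarrow> 'a \<Rightarrow> ('a \<Rightarrow> 'a) \<Rightarrow> int \<Rightarrow> 'a \<Rightarrow> 'a" where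
  "int_mult add zero neg k x =
     (if k \<ge> 0 then nat_mult add zero (nat k) x else neg (nat_mult add zero (nat (- k)) x))"

definition cyclic_add :: "('a \<Rightarrow> 'a \<Rightarrow> 'a) \<Rightarrow> 'a \<Rightarrow> ('a \<Rightarrow> 'a) \<Rightarrow> 'a \<Rightarrow> 'a set" where
  "cyclic_add add zero neg x = {int_mult add zero neg k x | k. True}"

definition infinite_add_order :: "('a \<Rightarrow> 'a \<Rightarrow> 'a) \<Rightarrow> 'a \<Rightarrow> 'a \<Rightarrow> bool" where
  "infinite_add_order add zero x \<longleftrightarrow> (\<forall>n::nat. n > 0 \<longrightarrow> nat_mult add zero n x \<noteq> zero)"

definition star_center ::
  "'a set \<Rightarrow> ('a \<Rightarrow> 'a \<Rightarrow> 'a) \<Rightarrow> 'a \<Rightarrow> ('a \<Rightarrow> 'a) \<Rightarrow> ('a \<Rightarrow> 'a \<Rightarrow> 'a) \<Rightarrow> 'a set" where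
  "star_center A add zero neg mul =
     {a \<in> A. \<forall>x\<in>A. star add neg mul a x = zero \<and> star add neg mul x a = zero}"

text \<open>\<zeta>_2: preimage of the \<star>-center of A/\<zeta>. Since (a+\<zeta>)\<star>(x+\<zeta>) = a\<star>x + \<zeta>
  in the quotient brace, a+\<zeta> lies in \<zeta>(A/\<zeta>) iff a\<star>x and x\<star>a lie in \<zeta> for all x.\<close>
definition star_center2 ::
  "'a set \<Rightarrow> ('a \<Rightarrow> 'a \<Rightarrow> 'a) \<Rightarrow> 'a \<Rightarrow> ('a \<Rightarrow> 'a) \<Rightarrow> ('a \<Rightarrow> 'a \<Rightarrow> 'a) \<Rightarrow> 'a set" where
  "star_center2 A add zero neg mul =
     {a \<in> A. \<forall>x\<in>A. star add neg mul a x \<in> star_center A add zero neg mul \<and>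
                    star add neg mul x a \<in> star_center A add zero neg mul}"

end

theory Submission
  imports Defs "HOL-Algebra.Group"
begin

definition addgrp :: "'a set \<Rightarrow> ('a \<Rightarrow> 'a \<Rightarrow> 'a) \<Rightarrow> 'a \<Rightarrow> 'a monoid" where
  "addgrp A add zero = \<lparr>carrier = A, monoid.mult = add, one = zero\<rparr>"

lemma addgrp_comm:
  assumes brace: "left_brace A add zero neg mul e minv"
  shows "comm_group (addgrp A add zero)"
proof -
  have z: "zero \<in> A" and cl: "\<And>x y. x \<in> A \<Longrightarrow> y \<in> A \<Longrightarrow> add x y \<in> A"
    and ng: "\<And>x. x \<in> A \<Longrightarrow> neg x \<in> A"
    and as: "\<And>x y z. x \<in> A \<Longrightarrow> y \<in> A \<Longrightarrow> z \<in> A \<Longrightarrow> add (add x y) z = add x (add y z)"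
    and cm: "\<And>x y. x \<in> A \<Longrightarrow> y \<in> A \<Longrightarrow> add x y = add y x"
    and l0: "\<And>x. x \<in> A \<Longrightarrow> add zero x = x"
    and li: "\<And>x. x \<in> A \<Longrightarrow> add (neg x) x = zero"
    using brace unfolding left_brace_def by auto
  show ?thesis unfolding addgrp_def
    by (rule comm_groupI) (auto intro: z cl as cm l0 li ng)
qed

lemma addgrp_inv:
  assumes brace: "left_brace A add zero neg mul e minv" and x: "x \<in> A"
  shows "inv\<^bsub>addgrp A add zero\<^esub> x = neg x"
proof -
  interpret comm_group "addgrp A add zero" by (rule addgrp_comm[OF brace])
  show ?thesis
    using brace x by (intro inv_equality) (auto simp: left_brace_def addgrp_def)
qed

lemma nat_mult_pow:
  assumes brace: "left_brace A add zero neg mul e minv" and x: "x \<in> A"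
  shows "nat_mult add zero n x = x [^]\<^bsub>addgrp A add zero\<^esub> n"
proof -
  interpret comm_group "addgrp A add zero" by (rule addgrp_comm[OF brace])
  show ?thesis
  proof (induction n)
    case 0
    then show ?case by (simp add: addgrp_def)
  next
    case (Suc n)
    have "x [^]\<^bsub>addgrp A add zero\<^esub> Suc n = x [^]\<^bsub>addgrp A add zero\<^esub> n \<otimes>\<^bsub>addgrp A add zero\<^esub> x"
      by simp
    also have "\<dots> = x \<otimes>\<^bsub>addgrp A add zero\<^esub> x [^]\<^bsub>addgrp A add zero\<^esub> n"
      using x by (intro m_comm nat_pow_closed) (auto simp: addgrp_def)
    finally show ?case using Suc by (simp add: addgrp_def)
  qed
qed

lemma int_mult_pow:
  assumes brace: "left_brace A add zero neg mul e minv" and x: "x \<in> A"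
  shows "int_mult add zero neg k x = x [^]\<^bsub>addgrp A add zero\<^esub> k"
proof -
  interpret comm_group "addgrp A add zero" by (rule addgrp_comm[OF brace])
  have xc: "x \<in> carrier (addgrp A add zero)" using x by (simp add: addgrp_def)
  have c: "x [^]\<^bsub>addgrp A add zero\<^esub> (n::nat) \<in> A" for n
    using nat_pow_closed[OF xc, of n] by (simp add: addgrp_def)
  show ?thesis
  proof (cases "k < 0")
    case True
    then show ?thesis unfolding int_mult_def int_pow_def2[of _ x k]
      using nat_mult_pow[OF brace x, of "nat (-k)"] addgrp_inv[OF brace c, of "nat (-k)"] by simp
  next
    case False
    then show ?thesis unfolding int_mult_def int_pow_def2[of _ x k]
      using nat_mult_pow[OF brace x, of "nat k"] by simp
  qed
qed

theorem proposition3p3: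
  fixes A :: "'a set" and add mul :: "'a \<Rightarrow> 'a \<Rightarrow> 'a" and zero one :: 'a
    and neg minv :: "'a \<Rightarrow> 'a" and a :: 'a
  assumes brace: "left_brace A add zero neg mul one minv"
    and aA: "a \<in> A"
    and inf: "infinite_add_order add zero a"
  shows "(star add neg mul a (star add neg mul a a) = zero \<longrightarrow>
            cyclic_add add zero neg a \<inter> cyclic_add add zero neg (star add neg mul a a) = {zero})
       \<and> (a \<in> star_center2 A add zero neg mul \<longrightarrow>
            cyclic_add add zero neg a \<inter> cyclic_add add zero neg (star add neg mul a a) = {zero})"
proof -
  define G where "G = addgrp A add zero"
  interpret comm_group G unfolding G_def by (rule addgrp_comm[OF brace])
  have carr: "carrier G = A" and mG: "\<And>x y. x \<otimes>\<^bsub>G\<^esub> y = add x y" and oG: "\<one>\<^bsub>G\<^esub> = zero"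
    by (auto simp: G_def addgrp_def)
  have invG: "\<And>x. x \<in> A \<Longrightarrow> inv\<^bsub>G\<^esub> x = neg x"
    unfolding G_def by (rule addgrp_inv[OF brace])
  have mulA: "\<And>x y. x \<in> A \<Longrightarrow> y \<in> A \<Longrightarrow> mul x y \<in> A"
    using brace by (simp add: left_brace_def)
  have distr: "\<And>b c. b \<in> A \<Longrightarrow> c \<in> A \<Longrightarrow> mul a (add b c) = add (add (mul a b) (mul a c)) (neg a)"
    using brace aA by (simp add: left_brace_def)
  define lam where "lam = (\<lambda>x. mul a x \<otimes>\<^bsub>G\<^esub> inv\<^bsub>G\<^esub> a)"
  have starE: "\<And>y. y \<in> A \<Longrightarrow> star add neg mul a y = lam y \<otimes>\<^bsub>G\<^esub> inv\<^bsub>G\<^esub> y"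
    unfolding star_def lam_def using aA by (simp add: mG invG)
  have lamA: "\<And>x. x \<in> A \<Longrightarrow> lam x \<in> A"
    unfolding lam_def using aA mulA carr by auto
  have hom: "lam \<in> hom G G"
  proof (rule homI)
    fix x assume "x \<in> carrier G" thus "lam x \<in> carrier G" using lamA carr by auto
  next
    fix x y assume x: "x \<in> carrier G" and y: "y \<in> carrier G"
    have "lam (x \<otimes>\<^bsub>G\<^esub> y) = (mul a x \<otimes>\<^bsub>G\<^esub> mul a y \<otimes>\<^bsub>G\<^esub> inv\<^bsub>G\<^esub> a) \<otimes>\<^bsub>G\<^esub> inv\<^bsub>G\<^esub> a"
      unfolding lam_def using x y carr aA by (simp add: mG invG distr)
    also have "\<dots> = lam x \<otimes>\<^bsub>G\<^esub> lam y"
    proof -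
      have "mul a x \<in> carrier G" "mul a y \<in> carrier G" "inv\<^bsub>G\<^esub> a \<in> carrier G"
        using x y carr aA mulA by auto
      thus ?thesis unfolding lam_def by (simp add: m_ac)
    qed
    finally show "lam (x \<otimes>\<^bsub>G\<^esub> y) = lam x \<otimes>\<^bsub>G\<^esub> lam y" .
  qed
  define c where "c = star add neg mul a a"
  have cA: "c \<in> A" unfolding c_def using starE[OF aA] lamA[OF aA] aA carr by auto
  have lama: "lam a = c \<otimes>\<^bsub>G\<^esub> a"
    proof -
    have "lam a \<in> carrier G" "a \<in> carrier G" using lamA[OF aA] aA carr by auto
    thus ?thesis unfolding c_def starE[OF aA] by (simp add: m_assoc)
  qed
  have main: "cyclic_add add zero neg a \<inter> cyclic_add add zero neg c = {zero}"
    if ac: "star add neg mul a c = zero"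
  proof -
    have lamc: "lam c = c"
    proof -
      have "lam c \<otimes>\<^bsub>G\<^esub> inv\<^bsub>G\<^esub> c = \<one>\<^bsub>G\<^esub>" using ac starE[OF cA] oG by simp
      moreover have "lam c \<in> carrier G" "c \<in> carrier G" using lamA[OF cA] cA carr by auto
      ultimately have "(lam c \<otimes>\<^bsub>G\<^esub> inv\<^bsub>G\<^esub> c) \<otimes>\<^bsub>G\<^esub> c = c" by simp
      thus ?thesis using \<open>lam c \<in> carrier G\<close> \<open>c \<in> carrier G\<close> by (simp add: m_assoc)
    qed
    have pa: "\<And>k. int_mult add zero neg k a = a [^]\<^bsub>G\<^esub> k"
      unfolding G_def by (rule int_mult_pow[OF brace aA])
    have pc: "\<And>k. int_mult add zero neg k c = c [^]\<^bsub>G\<^esub> k"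
      unfolding G_def by (rule int_mult_pow[OF brace cA])
    have "x = zero" if xa: "x \<in> cyclic_add add zero neg a" and xc: "x \<in> cyclic_add add zero neg c" for x
    proof -
      obtain km where "x = int_mult add zero neg km a" using xa unfolding cyclic_add_def by blast
      hence "\<exists>m::int. x = a [^]\<^bsub>G\<^esub> m" using pa by blast
      then obtain m :: int where m: "x = a [^]\<^bsub>G\<^esub> m" by blast
      obtain kn where "x = int_mult add zero neg kn c" using xc unfolding cyclic_add_def by blast
      hence "\<exists>n::int. x = c [^]\<^bsub>G\<^esub> n" using pc by blast
      then obtain n :: int where n: "x = c [^]\<^bsub>G\<^esub> n" by blast
      have aG: "a \<in> carrier G" and cG: "c \<in> carrier G" using aA cA carr by auto
      have "lam x = (c \<otimes>\<^bsub>G\<^esub> a) [^]\<^bsub>G\<^esub> m"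
        using hom_int_pow[OF hom aG is_group is_group] m lama by simp
      also have "\<dots> = c [^]\<^bsub>G\<^esub> m \<otimes>\<^bsub>G\<^esub> x" using int_pow_distrib[OF cG aG] m by simp
      finally have 1: "lam x = c [^]\<^bsub>G\<^esub> m \<otimes>\<^bsub>G\<^esub> x" .
      have "lam x = x" using hom_int_pow[OF hom cG is_group is_group] n lamc by simp
      with 1 have "c [^]\<^bsub>G\<^esub> m \<otimes>\<^bsub>G\<^esub> x = \<one>\<^bsub>G\<^esub> \<otimes>\<^bsub>G\<^esub> x" using n cG by simp
      hence cm: "c [^]\<^bsub>G\<^esub> m = \<one>\<^bsub>G\<^esub>" using n cG using right_cancel[of x "c [^]\<^bsub>G\<^esub> m" "\<one>\<^bsub>G\<^esub>"] int_pow_closed[OF cG, of n] int_pow_closed[OF cG, of m] by simp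
      have "a [^]\<^bsub>G\<^esub> (m * m) = (c [^]\<^bsub>G\<^esub> n) [^]\<^bsub>G\<^esub> m"
        using int_pow_pow[OF aG] m n by metis
      also have "\<dots> = (c [^]\<^bsub>G\<^esub> m) [^]\<^bsub>G\<^esub> n"
        using int_pow_pow[OF cG] by (metis mult.commute)
      also have "\<dots> = \<one>\<^bsub>G\<^esub>" using cm by simp
      finally have am: "a [^]\<^bsub>G\<^esub> (m * m) = \<one>\<^bsub>G\<^esub>" .
      have "m = 0"
      proof (rule ccontr)
        assume "m \<noteq> 0"
        hence pos: "m * m > 0" by (simp add: zero_less_mult_iff linorder_neq_iff) blast
        have "int_mult add zero neg (m * m) a = zero" using am pa oG by simp
        hence "nat_mult add zero (nat (m * m)) a = zero" using pos by (simp add: int_mult_def)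
        thus False using inf pos unfolding infinite_add_order_def by simp
      qed
      thus ?thesis using m oG by simp
    qed
    moreover have "zero \<in> cyclic_add add zero neg a" "zero \<in> cyclic_add add zero neg c"
      unfolding cyclic_add_def by (rule CollectI, rule exI[of _ 0], simp add: int_mult_def)+
    ultimately show ?thesis by blast
  qed
  have "star add neg mul a c = zero" if "a \<in> star_center2 A add zero neg mul"
  proof -
    have "c \<in> star_center A add zero neg mul"
      using that aA unfolding star_center2_def c_def by blast
    thus ?thesis using aA unfolding star_center_def by blast
  qed
  thus ?thesis using main unfolding c_def by blast
qed

end
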